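(* Every Hopf heap $(C,\chi)$ admits a Grunspan map; explicitly $\vartheta(c)=\sum[c_{(1)},[e_{(1)},c_{(3)},c_{(2)}],e_{(2)}]$ for all $c\in C$, where $e\in C$ is any element with $\varepsilon(e)=1$.
   Context: Work over a field $\mathbb{F}$; coalgebras coassociative, counital, of dimension at least one, Sweedler notation; $C^{\mathrm{co}}$ is the co-opposite coalgebra. A Hopf heap is a coalgebra $C$ with a coalgebra map $\chi:C\otimes C^{\mathrm{co}}\otimes C\to C$, $a\otimes b\otimes c\mapsto[a,b,c]$ (so $\Delta[a,b,c]=\sum[a_{(1)},b_{(2)},c_{(1)}]\otimes[a_{(2)},b_{(1)},c_{(2)}]$, $\varepsilon[a,b,c]=\varepsilon(a)\varepsilon(b)\varepsilon(c)$), such that $[[a,b,c],d,e]=[a,b,[c,d,e]]$ and $\sum[c_{(1)},c_{(2)},a]=\sum[a,c_{(1)},c_{(2)}]=\varepsilon(c)a$ for all $a,b,c,d,e\in C$. A Grunspan map is a coalgebra map $\vartheta:C\to C$ with $[[a,b,\vartheta(c)],d,e]=[a,[d,c,b],e]$ for all $a,b,c,d,e\in C$. *)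

theory Defs
  imports Main "HOL.Vector_Spaces"
begin

text \<open>
Elements of C (x) C (resp. C (x) C (x) C) are
represented by finite lists of pairs (resp. triples), i.e. finite sums of simple
tensors; two such lists denote the same tensor iff every bilinear (resp. trilinear)
form C x C -> F (resp. C x C x C -> F) takes the same value on them (the dual of a
tensor product separates points).  Linear maps out of tensor products are
represented by multilinear maps.  The comultiplication is given as a function
Delta :: 'v => ('v * 'v) list, with Delta c a Sweedler representation of the
coproduct of c.
\<close>

definition lin_form :: "('f::field \<Rightarrow> 'v::ab_group_add \<Rightarrow> 'v) \<Rightarrow> ('v \<Rightarrow> 'f) \<Rightarrow> bool" where
  "lin_form sc f \<longleftrightarrow> (\<forall>x y. f (x + y) = f x + f y) \<and> (\<forall>a x. f (sc a x) = a * f x)"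

definition lin_map :: "('f::field \<Rightarrow> 'v::ab_group_add \<Rightarrow> 'v) \<Rightarrow> ('v \<Rightarrow> 'v) \<Rightarrow> bool" where
  "lin_map sc f \<longleftrightarrow> (\<forall>x y. f (x + y) = f x + f y) \<and> (\<forall>a x. f (sc a x) = sc a (f x))"

definition bil_form :: "('f::field \<Rightarrow> 'v::ab_group_add \<Rightarrow> 'v) \<Rightarrow> ('v \<Rightarrow> 'v \<Rightarrow> 'f) \<Rightarrow> bool" where
  "bil_form sc B \<longleftrightarrow> (\<forall>x. lin_form sc (B x)) \<and> (\<forall>y. lin_form sc (\<lambda>x. B x y))"

definition tril_form :: "('f::field \<Rightarrow> 'v::ab_group_add \<Rightarrow> 'v) \<Rightarrow> ('v \<Rightarrow> 'v \<Rightarrow> 'v \<Rightarrow> 'f) \<Rightarrow> bool" where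
  "tril_form sc T \<longleftrightarrow> (\<forall>x y. lin_form sc (T x y)) \<and> (\<forall>x z. lin_form sc (\<lambda>y. T x y z))
     \<and> (\<forall>y z. lin_form sc (\<lambda>x. T x y z))"

definition tril_map :: "('f::field \<Rightarrow> 'v::ab_group_add \<Rightarrow> 'v) \<Rightarrow> ('v \<Rightarrow> 'v \<Rightarrow> 'v \<Rightarrow> 'v) \<Rightarrow> bool" where
  "tril_map sc T \<longleftrightarrow> (\<forall>x y. lin_map sc (T x y)) \<and> (\<forall>x z. lin_map sc (\<lambda>y. T x y z))
     \<and> (\<forall>y z. lin_map sc (\<lambda>x. T x y z))"

definition tensor2_eq :: "('f::field \<Rightarrow> 'v::ab_group_add \<Rightarrow> 'v) \<Rightarrow> ('v \<times> 'v) list \<Rightarrow> ('v \<times> 'v) list \<Rightarrow> bool" where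
  "tensor2_eq sc xs ys \<longleftrightarrow> (\<forall>B. bil_form sc B \<longrightarrow>
      sum_list (map (\<lambda>(x, y). B x y) xs) = sum_list (map (\<lambda>(x, y). B x y) ys))"

definition tensor3_eq :: "('f::field \<Rightarrow> 'v::ab_group_add \<Rightarrow> 'v) \<Rightarrow> ('v \<times> 'v \<times> 'v) list \<Rightarrow> ('v \<times> 'v \<times> 'v) list \<Rightarrow> bool" where
  "tensor3_eq sc xs ys \<longleftrightarrow> (\<forall>T. tril_form sc T \<longrightarrow>
      sum_list (map (\<lambda>(x, y, z). T x y z) xs) = sum_list (map (\<lambda>(x, y, z). T x y z) ys))"

text \<open>(Delta (x) id) Delta c = sum c_(1) (x) c_(2) (x) c_(3), and (id (x) Delta) Delta c.\<close>
definition delta3L :: "('v \<Rightarrow> ('v \<times> 'v) list) \<Rightarrow> 'v \<Rightarrow> ('v \<times> 'v \<times> 'v) list" where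
  "delta3L D c = concat (map (\<lambda>(x, y). map (\<lambda>(x1, x2). (x1, x2, y)) (D x)) (D c))"

definition delta3R :: "('v \<Rightarrow> ('v \<times> 'v) list) \<Rightarrow> 'v \<Rightarrow> ('v \<times> 'v \<times> 'v) list" where
  "delta3R D c = concat (map (\<lambda>(x, y). map (\<lambda>(y1, y2). (x, y1, y2)) (D y)) (D c))"

definition coalgebra :: "('f::field \<Rightarrow> 'v::ab_group_add \<Rightarrow> 'v) \<Rightarrow> ('v \<Rightarrow> ('v \<times> 'v) list) \<Rightarrow> ('v \<Rightarrow> 'f) \<Rightarrow> bool" where
  "coalgebra sc D eps \<longleftrightarrow>
     vector_space sc \<and> (\<exists>c::'v. c \<noteq> 0) \<and>
     lin_form sc eps \<and>
     (\<forall>x y. tensor2_eq sc (D (x + y)) (D x @ D y)) \<and>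
     (\<forall>a x. tensor2_eq sc (D (sc a x)) (map (\<lambda>(u, v). (sc a u, v)) (D x))) \<and>
     (\<forall>c. tensor3_eq sc (delta3L D c) (delta3R D c)) \<and>
     (\<forall>c. sum_list (map (\<lambda>(x, y). sc (eps x) y) (D c)) = c) \<and>
     (\<forall>c. sum_list (map (\<lambda>(x, y). sc (eps y) x) (D c)) = c)"

definition coalg_map :: "('f::field \<Rightarrow> 'v::ab_group_add \<Rightarrow> 'v) \<Rightarrow> ('v \<Rightarrow> ('v \<times> 'v) list) \<Rightarrow> ('v \<Rightarrow> 'f) \<Rightarrow> ('v \<Rightarrow> 'v) \<Rightarrow> bool" where
  "coalg_map sc D eps f \<longleftrightarrow> lin_map sc f \<and>
     (\<forall>c. tensor2_eq sc (D (f c)) (map (\<lambda>(x, y). (f x, f y)) (D c))) \<and>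
     (\<forall>c. eps (f c) = eps c)"

text \<open>Hopf heap: chi is a trilinear map C x C x C -> C, i.e. a linear map
C (x) C^co (x) C -> C, which is a coalgebra map.\<close>
definition hopf_heap :: "('f::field \<Rightarrow> 'v::ab_group_add \<Rightarrow> 'v) \<Rightarrow> ('v \<Rightarrow> ('v \<times> 'v) list) \<Rightarrow> ('v \<Rightarrow> 'f)
     \<Rightarrow> ('v \<Rightarrow> 'v \<Rightarrow> 'v \<Rightarrow> 'v) \<Rightarrow> bool" where
  "hopf_heap sc D eps br \<longleftrightarrow>
     coalgebra sc D eps \<and> tril_map sc br \<and>
     (\<forall>a b c. tensor2_eq sc (D (br a b c))
        (concat (map (\<lambda>(a1, a2). concat (map (\<lambda>(b1, b2). map (\<lambda>(c1, c2).
            (br a1 b2 c1, br a2 b1 c2)) (D c)) (D b))) (D a)))) \<and>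
     (\<forall>a b c. eps (br a b c) = eps a * eps b * eps c) \<and>
     (\<forall>a b c d e. br (br a b c) d e = br a b (br c d e)) \<and>
     (\<forall>a c. sum_list (map (\<lambda>(c1, c2). br c1 c2 a) (D c)) = sc (eps c) a) \<and>
     (\<forall>a c. sum_list (map (\<lambda>(c1, c2). br a c1 c2) (D c)) = sc (eps c) a)"

definition grunspan_map :: "('f::field \<Rightarrow> 'v::ab_group_add \<Rightarrow> 'v) \<Rightarrow> ('v \<Rightarrow> ('v \<times> 'v) list) \<Rightarrow> ('v \<Rightarrow> 'f)
     \<Rightarrow> ('v \<Rightarrow> 'v \<Rightarrow> 'v \<Rightarrow> 'v) \<Rightarrow> ('v \<Rightarrow> 'v) \<Rightarrow> bool" where
  "grunspan_map sc D eps br th \<longleftrightarrow> coalg_map sc D eps th \<and>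
     (\<forall>a b c d e. br (br a b (th c)) d e = br a (br d c b) e)"

definition grunspan_formula :: "('v::ab_group_add \<Rightarrow> ('v \<times> 'v) list) \<Rightarrow> ('v \<Rightarrow> 'v \<Rightarrow> 'v \<Rightarrow> 'v) \<Rightarrow> 'v \<Rightarrow> 'v \<Rightarrow> 'v" where
  "grunspan_formula D br e c = sum_list (concat (map (\<lambda>(c1, c2, c3).
      map (\<lambda>(e1, e2). br c1 (br e1 c3 c2) e2) (D e)) (delta3L D c)))"

end

theory Submission
  imports Defs
begin



lemma sep_lemma:
  fixes sc :: "'f::field \<Rightarrow> 'v::ab_group_add \<Rightarrow> 'v"
  assumes vs: "vector_space sc" and h: "\<And>\<phi>. lin_form sc \<phi> \<Longrightarrow> \<phi> x = \<phi> y"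
  shows "x = y"
proof (rule ccontr)
  assume ne: "x \<noteq> y"
  interpret vs: vector_space sc by fact
  interpret ff: vector_space "(*) :: 'f \<Rightarrow> 'f \<Rightarrow> 'f" by unfold_locales (auto simp: algebra_simps)
  interpret p: vector_space_pair sc "(*) :: 'f \<Rightarrow> 'f \<Rightarrow> 'f" by unfold_locales
  define v where "v = x - y"
  have v0: "v \<noteq> 0" using ne by (simp add: v_def)
  have ind: "vs.independent {v}" using v0 by (simp add: vs.independent_insert vs.span_empty)
  define \<phi> where "\<phi> = p.construct {v} (\<lambda>_. 1::'f)"
  have lin: "Vector_Spaces.linear sc (*) \<phi>" unfolding \<phi>_def using p.linear_construct[OF ind] by blast
  have "\<phi> v = 1" unfolding \<phi>_def by (rule p.construct_basis[OF ind]) simp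
  moreover have "lin_form sc \<phi>" using lin unfolding lin_form_def
    by (simp add: linear_iff)
  hence "\<phi> x = \<phi> y" by (rule h)
  hence "\<phi> v = 0" using lin unfolding v_def by (simp add: p.linear_diff[OF lin])
  ultimately show False by simp
qed



definition SW :: "('v \<Rightarrow> ('v \<times> 'v) list) \<Rightarrow> 'v \<Rightarrow> ('v \<Rightarrow> 'v \<Rightarrow> 'b::comm_monoid_add) \<Rightarrow> 'b" where
  "SW D c f = sum_list (map (\<lambda>(x, y). f x y) (D c))"

lemma sum_list_map_concat: "sum_list (map g (concat xss)) = sum_list (map (\<lambda>xs. sum_list (map g xs)) xss)"
  by (induction xss) auto

lemma sum_list_swap:
  fixes f :: "'a \<Rightarrow> 'c \<Rightarrow> 'b::comm_monoid_add"
  shows "sum_list (map (\<lambda>a. sum_list (map (\<lambda>b. f a b) ys)) xs) = sum_list (map (\<lambda>b. sum_list (map (\<lambda>a. f a b) xs)) ys)"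
proof (induction xs)
  case Nil then show ?case by (induction ys) auto
next
  case (Cons x xs)
  have "sum_list (map (\<lambda>b. f x b + sum_list (map (\<lambda>a. f a b) xs)) ys) = sum_list (map (\<lambda>b. f x b) ys) + sum_list (map (\<lambda>b. sum_list (map (\<lambda>a. f a b) xs)) ys)"
    by (induction ys) (auto simp: add_ac)
  with Cons show ?case by simp
qed

lemma SW_swap: "SW D a (\<lambda>x y. SW D b (\<lambda>u v. F x y u v)) = SW D b (\<lambda>u v. SW D a (\<lambda>x y. F x y u v))"
  unfolding SW_def using sum_list_swap[of "\<lambda>p q. F (fst p) (snd p) (fst q) (snd q)" "D b" "D a"]
  by (simp add: case_prod_beta')

lemma SW_cong: "(\<And>x y. f x y = g x y) \<Longrightarrow> SW D c f = SW D c g" by (simp add: SW_def)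

lemma SW_add_fun: "SW D c (\<lambda>x y. f x y + g x y) = SW D c f + SW D c g"
  unfolding SW_def by (simp add: sum_list_addf case_prod_beta')

locale HH =
  fixes sc :: "'f::field \<Rightarrow> 'v::ab_group_add \<Rightarrow> 'v"
    and D :: "'v \<Rightarrow> ('v \<times> 'v) list" and eps :: "'v \<Rightarrow> 'f"
    and br :: "'v \<Rightarrow> 'v \<Rightarrow> 'v \<Rightarrow> 'v"
  assumes hh: "hopf_heap sc D eps br"
begin

lemma coal: "coalgebra sc D eps" using hh by (simp add: hopf_heap_def)
lemma vsp: "vector_space sc" using coal by (simp add: coalgebra_def)

sublocale vs: vector_space sc by (rule vsp)

abbreviation lin where "lin f \<equiv> lin_map sc f"

definition bil :: "('v \<Rightarrow> 'v \<Rightarrow> 'v) \<Rightarrow> bool" where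
  "bil f \<longleftrightarrow> (\<forall>x. lin (f x)) \<and> (\<forall>y. lin (\<lambda>x. f x y))"
definition tril :: "('v \<Rightarrow> 'v \<Rightarrow> 'v \<Rightarrow> 'v) \<Rightarrow> bool" where
  "tril f \<longleftrightarrow> (\<forall>x y. lin (f x y)) \<and> (\<forall>x z. lin (\<lambda>y. f x y z)) \<and> (\<forall>y z. lin (\<lambda>x. f x y z))"

lemma bilI: "(\<And>x. lin (f x)) \<Longrightarrow> (\<And>y. lin (\<lambda>x. f x y)) \<Longrightarrow> bil f" by (simp add: bil_def)
lemma trilI: "(\<And>x y. lin (f x y)) \<Longrightarrow> (\<And>x z. lin (\<lambda>y. f x y z)) \<Longrightarrow> (\<And>y z. lin (\<lambda>x. f x y z)) \<Longrightarrow> tril f"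
  by (simp add: tril_def)

lemma lin_add: "lin f \<Longrightarrow> f (x + y) = f x + f y" by (simp add: lin_map_def)
lemma lin_scale: "lin f \<Longrightarrow> f (sc a x) = sc a (f x)" by (simp add: lin_map_def)
lemma lin_zero: "lin f \<Longrightarrow> f 0 = 0"
  using lin_scale[of f 0 0] by simp
lemma lin_sum_list: "lin f \<Longrightarrow> f (sum_list xs) = sum_list (map f xs)"
  by (induction xs) (auto simp: lin_zero lin_add)

lemma lin_form_sum_list: "lin_form sc f \<Longrightarrow> f (sum_list xs) = sum_list (map f xs)"
proof (induction xs)
  case Nil
  then show ?case unfolding lin_form_def using spec[of _ 0, OF spec[of _ 0]] by (metis add_cancel_right_right sum_list.Nil list.simps(8))
next
  case (Cons a xs) then show ?case by (simp add: lin_form_def)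
qed

lemma sep: "(\<And>\<phi>. lin_form sc \<phi> \<Longrightarrow> \<phi> x = \<phi> y) \<Longrightarrow> x = y"
  by (rule sep_lemma[OF vsp])

lemma lin_form_comp: "lin_form sc \<phi> \<Longrightarrow> lin f \<Longrightarrow> lin_form sc (\<lambda>x. \<phi> (f x))"
  by (simp add: lin_form_def lin_map_def)

lemma t2: assumes "tensor2_eq sc xs ys" "bil f"
  shows "sum_list (map (\<lambda>(x, y). f x y) xs) = sum_list (map (\<lambda>(x, y). f x y) ys)"
proof (rule sep)
  fix \<phi> assume p: "lin_form sc \<phi>"
  have "bil_form sc (\<lambda>x y. \<phi> (f x y))" using assms(2) p unfolding bil_form_def bil_def
    by (auto intro: lin_form_comp)
  hence "sum_list (map (\<lambda>(x, y). \<phi> (f x y)) xs) = sum_list (map (\<lambda>(x, y). \<phi> (f x y)) ys)"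
    using assms(1) unfolding tensor2_eq_def by blast
  thus "\<phi> (sum_list (map (\<lambda>(x, y). f x y) xs)) = \<phi> (sum_list (map (\<lambda>(x, y). f x y) ys))"
    by (simp add: lin_form_sum_list[OF p] o_def case_prod_beta')
qed

lemma t3: assumes "tensor3_eq sc xs ys" "tril f"
  shows "sum_list (map (\<lambda>(x, y, z). f x y z) xs) = sum_list (map (\<lambda>(x, y, z). f x y z) ys)"
proof (rule sep)
  fix \<phi> assume p: "lin_form sc \<phi>"
  have "tril_form sc (\<lambda>x y z. \<phi> (f x y z))" using assms(2) p unfolding tril_form_def tril_def
    by (auto intro: lin_form_comp)
  hence "sum_list (map (\<lambda>(x, y, z). \<phi> (f x y z)) xs) = sum_list (map (\<lambda>(x, y, z). \<phi> (f x y z)) ys)"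
    using assms(1) unfolding tensor3_eq_def by blast
  thus "\<phi> (sum_list (map (\<lambda>(x, y, z). f x y z) xs)) = \<phi> (sum_list (map (\<lambda>(x, y, z). f x y z) ys))"
    by (simp add: lin_form_sum_list[OF p] o_def case_prod_beta')
qed

lemma scale_sum_list: "sum_list (map (\<lambda>p. sc a (g p)) xs) = sc a (sum_list (map g xs))"
  by (induction xs) (auto simp: vs.scale_right_distrib)

lemma SW_c_add: "bil f \<Longrightarrow> SW D (x + y) f = SW D x f + SW D y f"
  using t2[of "D (x+y)" "D x @ D y" f] coal unfolding coalgebra_def SW_def by auto

lemma SW_c_scale: "bil f \<Longrightarrow> SW D (sc a x) f = sc a (SW D x f)"
proof -
  assume b: "bil f"
  have "SW D (sc a x) f = sum_list (map (\<lambda>(x, y). f x y) (map (\<lambda>(u, v). (sc a u, v)) (D x)))"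
    using t2[OF _ b, of "D (sc a x)" "map (\<lambda>(u, v). (sc a u, v)) (D x)"] coal unfolding coalgebra_def SW_def by auto
  also have "\<dots> = sum_list (map (\<lambda>p. sc a (f (fst p) (snd p))) (D x))"
  proof -
    have "\<And>u v. f (sc a u) v = sc a (f u v)" using b unfolding bil_def
      using lin_scale[of "\<lambda>x. f x _"] by blast
    thus ?thesis by (simp add: o_def case_prod_beta')
  qed
  also have "\<dots> = sc a (SW D x f)" unfolding SW_def
    by (simp add: scale_sum_list case_prod_beta')
  finally show ?thesis .
qed

lemma tril_br: "tril_map sc br" using hh by (simp add: hopf_heap_def)

lemma lin_id: "lin (\<lambda>x. x)" by (simp add: lin_map_def)
lemma lin_br1: "lin g \<Longrightarrow> lin (\<lambda>x. br (g x) b c)"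
  using tril_br unfolding tril_map_def lin_map_def by simp
lemma lin_br2: "lin g \<Longrightarrow> lin (\<lambda>x. br a (g x) c)"
  using tril_br unfolding tril_map_def lin_map_def by simp
lemma lin_br3: "lin g \<Longrightarrow> lin (\<lambda>x. br a b (g x))"
  using tril_br unfolding tril_map_def lin_map_def by simp
lemma lin_addf: "lin f \<Longrightarrow> lin g \<Longrightarrow> lin (\<lambda>x. f x + g x)"
  by (simp add: lin_map_def vs.scale_right_distrib add_ac)
lemma lin_scf: "lin g \<Longrightarrow> lin (\<lambda>x. sc a (g x))"
  by (simp add: lin_map_def vs.scale_right_distrib vs.scale_left_commute)

lemma eps_lin: "lin_form sc eps" using coal by (simp add: coalgebra_def)
lemma eps_add: "eps (x + y) = eps x + eps y" using eps_lin by (simp add: lin_form_def)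
lemma eps_scale: "eps (sc a x) = a * eps x" using eps_lin by (simp add: lin_form_def)

lemma lin_sc_eps: "lin g \<Longrightarrow> lin (\<lambda>x. sc (eps (g x)) w)"
  by (simp add: lin_map_def eps_add eps_scale vs.scale_left_distrib vs.scale_scale)

lemma SW_scale_fun: "SW D c (\<lambda>x y. sc a (f x y)) = sc a (SW D c f)"
  unfolding SW_def using scale_sum_list[of a "\<lambda>p. f (fst p) (snd p)" "D c"] by (simp add: case_prod_beta')

lemma push: "lin h \<Longrightarrow> h (SW D c f) = SW D c (\<lambda>x y. h (f x y))"
  unfolding SW_def by (simp add: lin_sum_list o_def case_prod_beta')

lemma lin_SW_c: "bil f \<Longrightarrow> lin g \<Longrightarrow> lin (\<lambda>x. SW D (g x) f)"
  unfolding lin_map_def by (simp add: SW_c_add SW_c_scale)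

lemma lin_SW_f: "(\<And>a b. lin (\<lambda>x. f a b x)) \<Longrightarrow> lin (\<lambda>x. SW D c (\<lambda>a b. f a b x))"
proof -
  assume h: "\<And>a b. lin (\<lambda>x. f a b x)"
  show ?thesis unfolding lin_map_def
  proof (intro conjI allI)
    fix x y show "SW D c (\<lambda>a b. f a b (x + y)) = SW D c (\<lambda>a b. f a b x) + SW D c (\<lambda>a b. f a b y)"
      using h[THEN lin_add] by (simp add: SW_add_fun)
  next
    fix a x show "SW D c (\<lambda>aa b. f aa b (sc a x)) = sc a (SW D c (\<lambda>a b. f a b x))"
      using h[THEN lin_scale] by (simp add: SW_scale_fun)
  qed
qed

lemmas lin_intros = lin_id lin_br1 lin_br2 lin_br3 lin_addf lin_scf lin_sc_eps lin_SW_c lin_SW_f bilI trilI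

lemma sum_delta3L: "sum_list (map (\<lambda>(x, y, z). f x y z) (delta3L D c)) = SW D c (\<lambda>P z. SW D P (\<lambda>x y. f x y z))"
  unfolding delta3L_def SW_def by (simp add: sum_list_map_concat o_def case_prod_beta')
lemma sum_delta3R: "sum_list (map (\<lambda>(x, y, z). f x y z) (delta3R D c)) = SW D c (\<lambda>x P. SW D P (\<lambda>y z. f x y z))"
  unfolding delta3R_def SW_def by (simp add: sum_list_map_concat o_def case_prod_beta')

lemma coassoc: "tril f \<Longrightarrow> SW D c (\<lambda>P z. SW D P (\<lambda>x y. f x y z)) = SW D c (\<lambda>x P. SW D P (\<lambda>y z. f x y z))"
  using t3[of "delta3L D c" "delta3R D c" f] coal unfolding coalgebra_def sum_delta3L sum_delta3R by auto

lemma counitL: "lin g \<Longrightarrow> SW D c (\<lambda>x y. sc (eps x) (g y)) = g c"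
proof -
  assume g: "lin g"
  have "g c = g (SW D c (\<lambda>x y. sc (eps x) y))" using coal unfolding coalgebra_def SW_def by auto
  also have "\<dots> = SW D c (\<lambda>x y. sc (eps x) (g y))" by (simp add: push g lin_scale)
  finally show ?thesis by simp
qed
lemma counitR: "lin g \<Longrightarrow> SW D c (\<lambda>x y. sc (eps y) (g x)) = g c"
proof -
  assume g: "lin g"
  have "g c = g (SW D c (\<lambda>x y. sc (eps y) x))" using coal unfolding coalgebra_def SW_def by auto
  also have "\<dots> = SW D c (\<lambda>x y. sc (eps y) (g x))" by (simp add: push g lin_scale)
  finally show ?thesis by simp
qed

lemma br_assoc: "br (br a b c) d e = br a b (br c d e)" using hh by (simp add: hopf_heap_def)
lemma collL: "SW D c (\<lambda>x y. br x y a) = sc (eps c) a" using hh by (simp add: hopf_heap_def SW_def)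
lemma collR: "SW D c (\<lambda>x y. br a x y) = sc (eps c) a" using hh by (simp add: hopf_heap_def SW_def)
lemma eps_br: "eps (br a b c) = eps a * eps b * eps c" using hh by (simp add: hopf_heap_def)

lemma delta_br: "bil f \<Longrightarrow> SW D (br a b c) f = SW D a (\<lambda>a1 a2. SW D b (\<lambda>b1 b2. SW D c (\<lambda>c1 c2. f (br a1 b2 c1) (br a2 b1 c2))))"
proof -
  assume b: "bil f"
  have "tensor2_eq sc (D (br a b c))
        (concat (map (\<lambda>(a1, a2). concat (map (\<lambda>(b1, b2). map (\<lambda>(c1, c2).
            (br a1 b2 c1, br a2 b1 c2)) (D c)) (D b))) (D a)))" using hh by (simp add: hopf_heap_def)
  from t2[OF this b] show ?thesis unfolding SW_def
    by (simp add: sum_list_map_concat o_def case_prod_beta')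
qed

end



lemma swap3: "SW D a (\<lambda>x y. SW D b (\<lambda>u v. SW D c (\<lambda>s t. F x y u v s t))) = SW D b (\<lambda>u v. SW D c (\<lambda>s t. SW D a (\<lambda>x y. F x y u v s t)))"
  by (subst SW_swap) (rule SW_cong, rule SW_swap)

context HH begin

lemma push_br1: "br (SW D c f) b d = SW D c (\<lambda>x y. br (f x y) b d)"
  by (rule push) (intro lin_intros)
lemma push_br2: "br a (SW D c f) d = SW D c (\<lambda>x y. br a (f x y) d)"
  by (rule push) (intro lin_intros)
lemma push_br3: "br a b (SW D c f) = SW D c (\<lambda>x y. br a b (f x y))"
  by (rule push) (intro lin_intros)
lemmas push_br = push_br1 push_br2 push_br3

lemma br_sc1: "br (sc a x) b d = sc a (br x b d)" by (rule lin_scale) (intro lin_intros)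
lemma br_sc2: "br b (sc a x) d = sc a (br b x d)" by (rule lin_scale) (intro lin_intros)
lemma br_sc3: "br b d (sc a x) = sc a (br b d x)" by (rule lin_scale) (intro lin_intros)
lemmas br_sc = br_sc1 br_sc2 br_sc3

lemma Rel2: "SW D x (\<lambda>x1 x2. SW D y (\<lambda>y1 y2. SW D q (\<lambda>q1 q2. br (br x1 y2 q1) (br x2 y1 q2) w)))
   = sc (eps x) (sc (eps y) (sc (eps q) w))"
proof -
  have "SW D (br x y q) (\<lambda>u1 u2. br u1 u2 w) = sc (eps (br x y q)) w" by (rule collL)
  moreover have "SW D (br x y q) (\<lambda>u1 u2. br u1 u2 w) = SW D x (\<lambda>x1 x2. SW D y (\<lambda>y1 y2. SW D q (\<lambda>q1 q2. br (br x1 y2 q1) (br x2 y1 q2) w)))"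
    by (rule delta_br) (intro lin_intros)
  ultimately show ?thesis by (simp add: eps_br vs.scale_scale)
qed

lemma Rel1: "SW D x (\<lambda>x1 x2. SW D y (\<lambda>y1 y2. SW D q (\<lambda>q1 q2. br p (br x1 y2 q1) (br x2 y1 q2))))
   = sc (eps x) (sc (eps y) (sc (eps q) p))"
proof -
  have "SW D (br x y q) (\<lambda>u1 u2. br p u1 u2) = sc (eps (br x y q)) p" by (rule collR)
  moreover have "SW D (br x y q) (\<lambda>u1 u2. br p u1 u2) = SW D x (\<lambda>x1 x2. SW D y (\<lambda>y1 y2. SW D q (\<lambda>q1 q2. br p (br x1 y2 q1) (br x2 y1 q2))))"
    by (rule delta_br) (intro lin_intros)
  ultimately show ?thesis by (simp add: eps_br vs.scale_scale)
qed

lemma R2: "SW D y (\<lambda>y1 y2. SW D q (\<lambda>q1 q2. br t y2 (br q1 (br x y1 q2) w))) = sc (eps y) (sc (eps q) (br t x w))"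
proof -
  let ?W = "sc (eps y) (sc (eps q) w)"
  let ?Z = "SW D x (\<lambda>x0 X'. br t x0 (SW D X' (\<lambda>x1 x2. SW D y (\<lambda>y1 y2. SW D q (\<lambda>q1 q2. br (br x1 y2 q1) (br x2 y1 q2) w)))))"
  have "?Z = SW D x (\<lambda>x0 X'. br t x0 (sc (eps X') ?W))" by (simp add: Rel2)
  also have "\<dots> = SW D x (\<lambda>x0 X'. sc (eps X') (br t x0 ?W))"
    by (simp add: lin_scale lin_intros)
  also have "\<dots> = br t x ?W" by (rule counitR) (intro lin_intros)
  also have "\<dots> = sc (eps y) (sc (eps q) (br t x w))" by (simp add: lin_scale lin_intros)
  finally have Z1: "?Z = sc (eps y) (sc (eps q) (br t x w))" .
  have "?Z = SW D x (\<lambda>x0 X'. SW D X' (\<lambda>x1 x2. br t x0 (SW D y (\<lambda>y1 y2. SW D q (\<lambda>q1 q2. br (br x1 y2 q1) (br x2 y1 q2) w)))))"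
    by (simp add: push_br)
  also have "\<dots> = SW D x (\<lambda>X x2. SW D X (\<lambda>x0 x1. br t x0 (SW D y (\<lambda>y1 y2. SW D q (\<lambda>q1 q2. br (br x1 y2 q1) (br x2 y1 q2) w)))))"
    by (rule coassoc[symmetric]) (intro lin_intros)
  also have "\<dots> = SW D x (\<lambda>X x2. SW D X (\<lambda>x0 x1. SW D y (\<lambda>y1 y2. SW D q (\<lambda>q1 q2. br (br (br t x0 x1) y2 q1) (br x2 y1 q2) w))))"
    by (simp add: push lin_intros br_assoc)
  also have "\<dots> = SW D x (\<lambda>X x2. SW D y (\<lambda>y1 y2. SW D q (\<lambda>q1 q2. SW D X (\<lambda>x0 x1. br (br (br t x0 x1) y2 q1) (br x2 y1 q2) w))))"
    by (rule SW_cong) (rule swap3)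
  also have "\<dots> = SW D x (\<lambda>X x2. SW D y (\<lambda>y1 y2. SW D q (\<lambda>q1 q2. br (br (SW D X (\<lambda>x0 x1. br t x0 x1)) y2 q1) (br x2 y1 q2) w)))"
    by (simp add: push_br)
  also have "\<dots> = SW D x (\<lambda>X x2. sc (eps X) (SW D y (\<lambda>y1 y2. SW D q (\<lambda>q1 q2. br (br t y2 q1) (br x2 y1 q2) w))))"
    by (simp add: collR br_sc SW_scale_fun)
  also have "\<dots> = SW D y (\<lambda>y1 y2. SW D q (\<lambda>q1 q2. br (br t y2 q1) (br x y1 q2) w))"
    by (rule counitL) (intro lin_intros)
  finally show ?thesis using Z1 by (simp add: br_assoc)
qed

end



lemma swap3': "SW D a (\<lambda>x y. SW D b (\<lambda>u v. SW D c (\<lambda>s t. F x y u v s t))) = SW D c (\<lambda>s t. SW D a (\<lambda>x y. SW D b (\<lambda>u v. F x y u v s t)))"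
  by (subst swap3) (subst swap3, rule refl)

context HH begin

definition th :: "'v \<Rightarrow> 'v \<Rightarrow> 'v" where
  "th e c = SW D c (\<lambda>P c3. SW D P (\<lambda>c1 c2. SW D e (\<lambda>e1 e2. br c1 (br e1 c3 c2) e2)))"

lemma T3: assumes e1: "eps e = 1" shows "SW D y (\<lambda>Y1 Y2. br w Y2 (th e Y1)) = sc (eps y) w"
proof -
  have "SW D y (\<lambda>Y1 Y2. br w Y2 (th e Y1)) = SW D y (\<lambda>Y1 Y2. SW D Y1 (\<lambda>P c3. br w Y2 (SW D P (\<lambda>c1 c2. SW D e (\<lambda>e1 e2. br c1 (br e1 c3 c2) e2)))))"
    unfolding th_def by (simp add: push_br)
  also have "\<dots> = SW D y (\<lambda>P Y'. SW D Y' (\<lambda>c3 Y2. br w Y2 (SW D P (\<lambda>c1 c2. SW D e (\<lambda>e1 e2. br c1 (br e1 c3 c2) e2)))))"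
    by (rule coassoc) (intro lin_intros)
  also have "\<dots> = SW D y (\<lambda>P Y'. SW D Y' (\<lambda>c3 Y2. SW D P (\<lambda>c1 c2. SW D e (\<lambda>e1 e2. br w Y2 (br c1 (br e1 c3 c2) e2)))))"
    by (simp add: push_br)
  also have "\<dots> = SW D y (\<lambda>P Y'. SW D e (\<lambda>e1 e2. SW D Y' (\<lambda>c3 Y2. SW D P (\<lambda>c1 c2. br w Y2 (br c1 (br e1 c3 c2) e2)))))"
    by (rule SW_cong) (rule swap3')
  also have "\<dots> = SW D y (\<lambda>P Y'. SW D e (\<lambda>e1 e2. sc (eps Y') (sc (eps P) (br w e1 e2))))"
    by (simp add: R2)
  also have "\<dots> = SW D y (\<lambda>P Y'. sc (eps P) (sc (eps Y') w))"
    by (simp add: SW_scale_fun collR e1 vs.scale_left_commute mult.commute)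
  also have "\<dots> = sc (eps y) w" by (rule counitL) (intro lin_intros)
  finally show ?thesis .
qed

end


context HH begin

lemma lin_th: "lin g \<Longrightarrow> lin (\<lambda>x. th e (g x))"
  unfolding th_def by (intro lin_intros)

lemmas lin_intros2 = lin_intros lin_th

lemma G1: assumes e1: "eps e = 1"
  shows "SW D x (\<lambda>x2 x3. SW D y (\<lambda>y1 y2. SW D q (\<lambda>q2 q3. br (br (br x2 y2 q2) q3 (th e y1)) x3 z)))
    = sc (eps x) (sc (eps y) (sc (eps q) z))"
proof -
  have 1: "SW D q (\<lambda>q2 q3. br (br (br x2 y2 q2) q3 (th e y1)) x3 z) = sc (eps q) (br (br x2 y2 (th e y1)) x3 z)" for x2 x3 y1 y2
  proof -
    have "SW D q (\<lambda>q2 q3. br (br (br x2 y2 q2) q3 (th e y1)) x3 z) = br x2 y2 (SW D q (\<lambda>q2 q3. br q2 q3 (br (th e y1) x3 z)))"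
      by (simp add: push_br br_assoc)
    also have "\<dots> = sc (eps q) (br (br x2 y2 (th e y1)) x3 z)" by (simp add: collL br_sc br_assoc)
    finally show ?thesis .
  qed
  have 2: "SW D y (\<lambda>y1 y2. br (br x2 y2 (th e y1)) x3 z) = sc (eps y) (br x2 x3 z)" for x2 x3
  proof -
    have "SW D y (\<lambda>y1 y2. br (br x2 y2 (th e y1)) x3 z) = br (SW D y (\<lambda>y1 y2. br x2 y2 (th e y1))) x3 z"
      by (simp add: push_br)
    also have "\<dots> = sc (eps y) (br x2 x3 z)" by (simp add: T3[OF e1] br_sc)
    finally show ?thesis .
  qed
  show ?thesis by (simp add: 1 2 SW_scale_fun collL vs.scale_left_commute)
qed

definition Iexp where "Iexp e p z x1 x2 x3 y1 y2 y3 q1 q2 q3 = br p (br x1 y3 q1) (br (br (br x2 y2 q2) q3 (th e y1)) x3 z)"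

lemma Ci: assumes e1: "eps e = 1"
  shows "SW D x (\<lambda>x1 X. SW D X (\<lambda>x2 x3. SW D y (\<lambda>Y y3. SW D Y (\<lambda>y1 y2. SW D q (\<lambda>q1 Q. SW D Q (\<lambda>q2 q3.
     Iexp e p z x1 x2 x3 y1 y2 y3 q1 q2 q3)))))) = br p (br x y q) z"
proof -
  have S1: "SW D Q (\<lambda>q2 q3. Iexp e p z x1 x2 x3 y1 y2 y3 q1 q2 q3) = sc (eps Q) (br p (br x1 y3 q1) (br (br x2 y2 (th e y1)) x3 z))"
    for Q x1 x2 x3 y1 y2 y3 q1
  proof -
    have "SW D Q (\<lambda>q2 q3. Iexp e p z x1 x2 x3 y1 y2 y3 q1 q2 q3) = br p (br x1 y3 q1) (br x2 y2 (SW D Q (\<lambda>q2 q3. br q2 q3 (br (th e y1) x3 z))))"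
      unfolding Iexp_def by (simp add: push_br br_assoc)
    also have "\<dots> = sc (eps Q) (br p (br x1 y3 q1) (br (br x2 y2 (th e y1)) x3 z))" by (simp add: collL br_sc br_assoc)
    finally show ?thesis .
  qed
  have S2: "SW D q (\<lambda>q1 Q. sc (eps Q) (br p (br x1 y3 q1) (br (br x2 y2 (th e y1)) x3 z))) = br p (br x1 y3 q) (br (br x2 y2 (th e y1)) x3 z)"
    for x1 x2 x3 y1 y2 y3 by (rule counitR) (intro lin_intros2)
  have S3: "SW D Y (\<lambda>y1 y2. br p m (br (br x2 y2 (th e y1)) x3 z)) = sc (eps Y) (br p m (br x2 x3 z))" for Y m x2 x3
  proof -
    have "SW D Y (\<lambda>y1 y2. br p m (br (br x2 y2 (th e y1)) x3 z)) = br p m (br (SW D Y (\<lambda>y1 y2. br x2 y2 (th e y1))) x3 z)"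
      by (simp add: push_br)
    also have "\<dots> = sc (eps Y) (br p m (br x2 x3 z))" by (simp add: T3[OF e1] br_sc)
    finally show ?thesis .
  qed
  have S4: "SW D y (\<lambda>Y y3. sc (eps Y) (br p (br x1 y3 q) (br x2 x3 z))) = br p (br x1 y q) (br x2 x3 z)" for x1 x2 x3
    by (rule counitL) (intro lin_intros2)
  have S5: "SW D X (\<lambda>x2 x3. br p m (br x2 x3 z)) = sc (eps X) (br p m z)" for X m
    by (simp add: push_br[symmetric] collL br_sc)
  have S6: "SW D x (\<lambda>x1 X. sc (eps X) (br p (br x1 y q) z)) = br p (br x y q) z"
    by (rule counitR) (intro lin_intros2)
  show ?thesis by (simp add: S1 S2 S3 S4 S5 S6)
qed

end


context HH begin

lemma Cii: assumes e1: "eps e = 1"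
  shows "SW D x (\<lambda>X x3. SW D y (\<lambda>y1 Y. SW D q (\<lambda>Q q3. SW D X (\<lambda>x1 x2. SW D Y (\<lambda>y2 y3. SW D Q (\<lambda>q1 q2.
     Iexp e p z x1 x2 x3 y1 y2 y3 q1 q2 q3)))))) = br (br p q (th e y)) x z"
proof -
  have R: "SW D X (\<lambda>x1 x2. SW D Y (\<lambda>y2 y3. SW D Q (\<lambda>q1 q2. Iexp e p z x1 x2 x3 y1 y2 y3 q1 q2 q3)))
     = sc (eps X) (sc (eps Y) (sc (eps Q) (br (br p q3 (th e y1)) x3 z)))" for X Y Q x3 y1 q3
  proof -
    have "SW D X (\<lambda>x1 x2. SW D Y (\<lambda>y2 y3. SW D Q (\<lambda>q1 q2. Iexp e p z x1 x2 x3 y1 y2 y3 q1 q2 q3)))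
      = br (br (SW D X (\<lambda>x1 x2. SW D Y (\<lambda>a b. SW D Q (\<lambda>q1 q2. br p (br x1 b q1) (br x2 a q2))))) q3 (th e y1)) x3 z"
      unfolding Iexp_def by (simp add: push_br br_assoc)
    also have "\<dots> = sc (eps X) (sc (eps Y) (sc (eps Q) (br (br p q3 (th e y1)) x3 z)))"
      by (simp add: Rel1 br_sc)
    finally show ?thesis .
  qed
  have C1: "SW D q (\<lambda>Q q3. sc (eps Q) (br (br p q3 (th e y1)) x3 z)) = br (br p q (th e y1)) x3 z" for y1 x3
    by (rule counitL) (intro lin_intros2)
  have C2: "SW D y (\<lambda>y1 Y. sc (eps Y) (br (br p q (th e y1)) x3 z)) = br (br p q (th e y)) x3 z" for x3
    by (rule counitR) (intro lin_intros2)
  have C3: "SW D x (\<lambda>X x3. sc (eps X) (br (br p q (th e y)) x3 z)) = br (br p q (th e y)) x z"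
    by (rule counitL) (intro lin_intros2)
  show ?thesis by (simp only: R SW_scale_fun C1 C2 C3)
qed

lemma reorg: "SW D x (\<lambda>X x3. SW D X (\<lambda>x1 x2. SW D y (\<lambda>y1 Y. SW D Y (\<lambda>y2 y3. SW D q (\<lambda>Q q3. SW D Q (\<lambda>q1 q2.
     F x1 x2 x3 y1 y2 y3 q1 q2 q3)))))) =
  SW D x (\<lambda>X x3. SW D y (\<lambda>y1 Y. SW D q (\<lambda>Q q3. SW D X (\<lambda>x1 x2. SW D Y (\<lambda>y2 y3. SW D Q (\<lambda>q1 q2.
     F x1 x2 x3 y1 y2 y3 q1 q2 q3))))))"
  apply (rule SW_cong)
  apply (rule trans[OF SW_swap])
  apply (rule SW_cong)
  apply (rule swap3')
  done

lemma bridge: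
  "SW D x (\<lambda>X x3. SW D X (\<lambda>x1 x2. SW D y (\<lambda>y1 Y. SW D Y (\<lambda>y2 y3. SW D q (\<lambda>Q q3. SW D Q (\<lambda>q1 q2.
     Iexp e p z x1 x2 x3 y1 y2 y3 q1 q2 q3)))))) =
   SW D x (\<lambda>x1 X. SW D X (\<lambda>x2 x3. SW D y (\<lambda>Y y3. SW D Y (\<lambda>y1 y2. SW D q (\<lambda>q1 Q. SW D Q (\<lambda>q2 q3.
     Iexp e p z x1 x2 x3 y1 y2 y3 q1 q2 q3))))))"
proof -
  have "SW D x (\<lambda>X x3. SW D X (\<lambda>x1 x2. SW D y (\<lambda>y1 Y. SW D Y (\<lambda>y2 y3. SW D q (\<lambda>Q q3. SW D Q (\<lambda>q1 q2.
     Iexp e p z x1 x2 x3 y1 y2 y3 q1 q2 q3)))))) =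
   SW D x (\<lambda>x1 X. SW D X (\<lambda>x2 x3. SW D y (\<lambda>y1 Y. SW D Y (\<lambda>y2 y3. SW D q (\<lambda>Q q3. SW D Q (\<lambda>q1 q2.
     Iexp e p z x1 x2 x3 y1 y2 y3 q1 q2 q3))))))"
    by (rule coassoc) (unfold Iexp_def, intro lin_intros2)
  also have "\<dots> = SW D x (\<lambda>x1 X. SW D X (\<lambda>x2 x3. SW D y (\<lambda>Y y3. SW D Y (\<lambda>y1 y2. SW D q (\<lambda>Q q3. SW D Q (\<lambda>q1 q2.
     Iexp e p z x1 x2 x3 y1 y2 y3 q1 q2 q3))))))"
    apply (rule SW_cong, rule SW_cong)
    apply (rule coassoc[symmetric])
    apply (unfold Iexp_def, intro lin_intros2)
    done
  also have "\<dots> = SW D x (\<lambda>x1 X. SW D X (\<lambda>x2 x3. SW D y (\<lambda>Y y3. SW D Y (\<lambda>y1 y2. SW D q (\<lambda>q1 Q. SW D Q (\<lambda>q2 q3.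
     Iexp e p z x1 x2 x3 y1 y2 y3 q1 q2 q3))))))"
    apply (rule SW_cong, rule SW_cong, rule SW_cong, rule SW_cong)
    apply (rule coassoc)
    apply (unfold Iexp_def, intro lin_intros2)
    done
  finally show ?thesis .
qed

theorem G: assumes e1: "eps e = 1" shows "br p (br x y q) z = br (br p q (th e y)) x z"
proof -
  note a = Ci[OF e1, where x=x and y=y and q=q and p=p and z=z]
  note b = bridge[where x=x and y=y and q=q and p=p and z=z and e=e]
  note c = reorg[where x=x and y=y and q=q and F="Iexp e p z"]
  note d = Cii[OF e1, where x=x and y=y and q=q and p=p and z=z]
  from a b c d show ?thesis by metis
qed

end



lemma swap4: "SW D a (\<lambda>x1 x2. SW D b (\<lambda>y1 y2. SW D c (\<lambda>z1 z2. SW D d (\<lambda>w1 w2. F x1 x2 y1 y2 z1 z2 w1 w2))))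
  = SW D b (\<lambda>y1 y2. SW D c (\<lambda>z1 z2. SW D d (\<lambda>w1 w2. SW D a (\<lambda>x1 x2. F x1 x2 y1 y2 z1 z2 w1 w2))))"
  apply (rule trans[OF SW_swap])
  apply (rule SW_cong)
  apply (rule swap3)
  done

lemma swap33: "SW D a (\<lambda>x1 x2. SW D (b x1 x2) (\<lambda>y1 y2. SW D (c x1 x2) (\<lambda>z1 z2.
    SW D d (\<lambda>u1 u2. SW D f (\<lambda>v1 v2. SW D g (\<lambda>w1 w2. F x1 x2 y1 y2 z1 z2 u1 u2 v1 v2 w1 w2))))))
  = SW D d (\<lambda>u1 u2. SW D f (\<lambda>v1 v2. SW D g (\<lambda>w1 w2. SW D a (\<lambda>x1 x2. SW D (b x1 x2) (\<lambda>y1 y2. SW D (c x1 x2) (\<lambda>z1 z2.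
    F x1 x2 y1 y2 z1 z2 u1 u2 v1 v2 w1 w2))))))"
  apply (subst swap4[where a="c _ _"])
  apply (subst swap4[where a="b _ _"])
  apply (subst swap4[where a=a])
  apply (rule refl)
  done



context HH begin

context fixes f :: "'v \<Rightarrow> 'v \<Rightarrow> 'v" assumes bf: "bil f"
begin

lemma lin_f1: "lin g \<Longrightarrow> lin (\<lambda>x. f (g x) y)"
  using bf unfolding bil_def lin_map_def by auto
lemma lin_f2: "lin g \<Longrightarrow> lin (\<lambda>x. f y (g x))"
  using bf unfolding bil_def lin_map_def by auto

lemmas lin_intros3 = lin_intros2 lin_f1 lin_f2

lemma pushf1: "f (SW D c g) z = SW D c (\<lambda>x y. f (g x y) z)"
  by (rule push) (intro lin_intros3)
lemma pushf2: "f z (SW D c g) = SW D c (\<lambda>x y. f z (g x y))"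
  by (rule push) (intro lin_intros3)
lemma f_sc1: "f (sc a x) z = sc a (f x z)" by (rule lin_scale) (intro lin_intros3)
lemma f_sc2: "f z (sc a x) = sc a (f z x)" by (rule lin_scale) (intro lin_intros3)

lemma E4: assumes e1: "eps e = 1"
  shows "SW D e (\<lambda>e1 e2. SW D e1 (\<lambda>g1 g2. SW D e2 (\<lambda>b1 b2. f (br X g2 b1) (br Y g1 b2)))) = f X Y"
proof -
  have "SW D e (\<lambda>e1 e2. SW D e1 (\<lambda>g1 g2. SW D e2 (\<lambda>b1 b2. f (br X g2 b1) (br Y g1 b2))))
     = SW D e (\<lambda>g1 E. SW D E (\<lambda>g2 e2. SW D e2 (\<lambda>b1 b2. f (br X g2 b1) (br Y g1 b2))))"
    by (rule coassoc) (intro lin_intros3)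
  also have "\<dots> = SW D e (\<lambda>g1 E. SW D E (\<lambda>M b2. SW D M (\<lambda>g2 b1. f (br X g2 b1) (br Y g1 b2))))"
    apply (rule SW_cong)
    apply (rule coassoc[symmetric])
    apply (intro lin_intros3)
    done
  also have "\<dots> = SW D e (\<lambda>g1 E. SW D E (\<lambda>M b2. f (SW D M (\<lambda>g2 b1. br X g2 b1)) (br Y g1 b2)))"
    by (simp add: pushf1)
  also have "\<dots> = SW D e (\<lambda>g1 E. SW D E (\<lambda>M b2. sc (eps M) (f X (br Y g1 b2))))"
    by (simp add: collR f_sc1)
  also have "\<dots> = SW D e (\<lambda>g1 E. f X (br Y g1 E))"
    apply (rule SW_cong)
    apply (rule counitL)
    apply (intro lin_intros3)
    done
  also have "\<dots> = f X (SW D e (\<lambda>g1 E. br Y g1 E))" by (simp add: pushf2)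
  also have "\<dots> = f X Y" by (simp add: collR e1)
  finally show ?thesis .
qed

lemma Cpart:
  "SW D c (\<lambda>P c3. SW D c3 (\<lambda>h1 h2. SW D P (\<lambda>c1 c2. SW D c1 (\<lambda>a1 a2. SW D c2 (\<lambda>k1 k2.
     f (br a1 k2 (th e h1)) (br a2 k1 (th e h2)))))))
   = SW D c (\<lambda>x y. f (th e x) (th e y))"
proof -
  have A: "SW D P (\<lambda>c1 c2. SW D c1 (\<lambda>a1 a2. SW D c2 (\<lambda>k1 k2. f (br a1 k2 (th e h1)) (br a2 k1 (th e h2)))))
    = sc (eps P) (f (th e h1) (th e h2))" for P h1 h2
  proof -
    have "SW D P (\<lambda>c1 c2. SW D c1 (\<lambda>a1 a2. SW D c2 (\<lambda>k1 k2. f (br a1 k2 (th e h1)) (br a2 k1 (th e h2)))))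
      = SW D P (\<lambda>a1 R. SW D R (\<lambda>a2 c2. SW D c2 (\<lambda>k1 k2. f (br a1 k2 (th e h1)) (br a2 k1 (th e h2)))))"
      by (rule coassoc) (intro lin_intros3)
    also have "\<dots> = SW D P (\<lambda>a1 R. SW D R (\<lambda>M k2. SW D M (\<lambda>a2 k1. f (br a1 k2 (th e h1)) (br a2 k1 (th e h2)))))"
      apply (rule SW_cong)
      apply (rule coassoc[symmetric])
      apply (intro lin_intros3)
      done
    also have "\<dots> = SW D P (\<lambda>a1 R. SW D R (\<lambda>M k2. sc (eps M) (f (br a1 k2 (th e h1)) (th e h2))))"
      by (simp add: pushf2[symmetric] collL f_sc2)
    also have "\<dots> = SW D P (\<lambda>a1 R. f (br a1 R (th e h1)) (th e h2))"
      apply (rule SW_cong)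
      apply (rule counitL)
      apply (intro lin_intros3)
      done
    also have "\<dots> = sc (eps P) (f (th e h1) (th e h2))"
      by (simp add: pushf1[symmetric] collL f_sc1)
    finally show ?thesis .
  qed
  have "SW D c (\<lambda>P c3. SW D c3 (\<lambda>h1 h2. SW D P (\<lambda>c1 c2. SW D c1 (\<lambda>a1 a2. SW D c2 (\<lambda>k1 k2.
     f (br a1 k2 (th e h1)) (br a2 k1 (th e h2)))))))
    = SW D c (\<lambda>P c3. sc (eps P) (SW D c3 (\<lambda>h1 h2. f (th e h1) (th e h2))))"
    by (simp add: A SW_scale_fun)
  also have "\<dots> = SW D c (\<lambda>x y. f (th e x) (th e y))"
    by (rule counitL) (intro lin_intros3)
  finally show ?thesis .
qed

lemma push_SW: "SW D (SW D c g) f = SW D c (\<lambda>x y. SW D (g x y) f)"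
  by (rule push) (intro lin_intros3 bf)

lemma Dth: assumes e1: "eps e = 1"
  shows "SW D (th e c) f = SW D c (\<lambda>x y. f (th e x) (th e y))"
proof -
  have "SW D (th e c) f = SW D c (\<lambda>P c3. SW D P (\<lambda>c1 c2. SW D e (\<lambda>e1 e2.
     SW D c1 (\<lambda>a1 a2. SW D (br e1 c3 c2) (\<lambda>m1 m2. SW D e2 (\<lambda>b1 b2. f (br a1 m2 b1) (br a2 m1 b2)))))))"
    unfolding th_def by (simp only: push_SW delta_br[OF bf])
  also have "\<dots> = SW D c (\<lambda>P c3. SW D P (\<lambda>c1 c2. SW D e (\<lambda>e1 e2.
     SW D (br e1 c3 c2) (\<lambda>m1 m2. SW D c1 (\<lambda>a1 a2. SW D e2 (\<lambda>b1 b2. f (br a1 m2 b1) (br a2 m1 b2)))))))"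
    apply (rule SW_cong, rule SW_cong, rule SW_cong)
    apply (rule SW_swap)
    done
  also have "\<dots> = SW D c (\<lambda>P c3. SW D P (\<lambda>c1 c2. SW D e (\<lambda>e1 e2.
     SW D e1 (\<lambda>g1 g2. SW D c3 (\<lambda>h1 h2. SW D c2 (\<lambda>k1 k2.
     SW D c1 (\<lambda>a1 a2. SW D e2 (\<lambda>b1 b2. f (br a1 (br g2 h1 k2) b1) (br a2 (br g1 h2 k1) b2)))))))))"
    apply (rule SW_cong, rule SW_cong, rule SW_cong)
    apply (rule delta_br)
    apply (intro lin_intros3)
    done
  also have "\<dots> = SW D c (\<lambda>P c3. SW D P (\<lambda>c1 c2. SW D e (\<lambda>e1 e2.
     SW D e1 (\<lambda>g1 g2. SW D c3 (\<lambda>h1 h2. SW D c2 (\<lambda>k1 k2.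
     SW D c1 (\<lambda>a1 a2. SW D e2 (\<lambda>b1 b2. f (br (br a1 k2 (th e h1)) g2 b1) (br (br a2 k1 (th e h2)) g1 b2)))))))))"
    by (simp only: G[OF e1])
  also have "\<dots> = SW D c (\<lambda>P c3. SW D P (\<lambda>c1 c2. SW D e (\<lambda>e1 e2.
     SW D e1 (\<lambda>g1 g2. SW D e2 (\<lambda>b1 b2. SW D c3 (\<lambda>h1 h2. SW D c2 (\<lambda>k1 k2.
     SW D c1 (\<lambda>a1 a2. f (br (br a1 k2 (th e h1)) g2 b1) (br (br a2 k1 (th e h2)) g1 b2)))))))))"
    apply (rule SW_cong, rule SW_cong, rule SW_cong, rule SW_cong)
    apply (rule swap4[symmetric])
    done
  also have "\<dots> = SW D c (\<lambda>P c3. SW D P (\<lambda>c1 c2. SW D c3 (\<lambda>h1 h2. SW D c2 (\<lambda>k1 k2.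
     SW D c1 (\<lambda>a1 a2. SW D e (\<lambda>e1 e2. SW D e1 (\<lambda>g1 g2. SW D e2 (\<lambda>b1 b2.
     f (br (br a1 k2 (th e h1)) g2 b1) (br (br a2 k1 (th e h2)) g1 b2)))))))))"
    apply (rule SW_cong, rule SW_cong)
    apply (rule swap33)
    done
  also have "\<dots> = SW D c (\<lambda>P c3. SW D P (\<lambda>c1 c2. SW D c3 (\<lambda>h1 h2. SW D c2 (\<lambda>k1 k2.
     SW D c1 (\<lambda>a1 a2. f (br a1 k2 (th e h1)) (br a2 k1 (th e h2)))))))"
    by (simp only: E4[OF e1])
  also have "\<dots> = SW D c (\<lambda>P c3. SW D c3 (\<lambda>h1 h2. SW D P (\<lambda>c1 c2.
     SW D c1 (\<lambda>a1 a2. SW D c2 (\<lambda>k1 k2. f (br a1 k2 (th e h1)) (br a2 k1 (th e h2)))))))"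
    apply (rule SW_cong)
    apply (rule trans[rotated, OF SW_swap])
    apply (rule SW_cong, rule SW_cong)
    apply (rule SW_swap)
    done
  also have "\<dots> = SW D c (\<lambda>x y. f (th e x) (th e y))" by (rule Cpart)
  finally show ?thesis .
qed

end
end


lemma sum_list_concat': "sum_list (concat xss) = sum_list (map sum_list xss)"
  by (induction xss) auto

context HH begin

lemma scl_list: "sum_list (map (\<lambda>p. sc (g p) v) xs) = sc (sum_list (map g xs)) v"
  by (induction xs) (auto simp: vs.scale_left_distrib)

lemma th_formula: "grunspan_formula D br e c = th e c"
  unfolding grunspan_formula_def th_def delta3L_def SW_def
  by (simp add: sum_list_concat' map_concat sum_list_map_concat o_def case_prod_beta')

lemma lin_th0: "lin (th e)"
  unfolding th_def by (intro lin_intros)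

lemma eps_SW: "eps (SW D c g) = SW D c (\<lambda>x y. eps (g x y))"
  unfolding SW_def by (simp add: lin_form_sum_list[OF eps_lin] o_def case_prod_beta')

lemma SW_eps2: "SW D c (\<lambda>x y. eps x * eps y) = eps c"
proof -
  have "eps c = eps (SW D c (\<lambda>x y. sc (eps x) y))" using coal unfolding coalgebra_def SW_def by auto
  thus ?thesis by (simp add: eps_SW eps_scale)
qed

lemma SW_multR: "SW D c (\<lambda>x y. g x y * k) = SW D c g * (k::'f)"
  unfolding SW_def by (simp add: sum_list_mult_const case_prod_beta')

lemma eps_th: assumes e1: "eps e = 1" shows "eps (th e c) = eps c"
proof -
  have "eps (th e c) = SW D c (\<lambda>P c3. SW D P (\<lambda>c1 c2. SW D e (\<lambda>e1 e2. ((eps c1 * eps c2) * eps c3) * (eps e1 * eps e2))))"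
    unfolding th_def by (simp add: eps_SW eps_br ac_simps)
  also have "\<dots> = SW D c (\<lambda>P c3. SW D P (\<lambda>c1 c2. (eps c1 * eps c2) * eps c3))"
    by (simp add: SW_def sum_list_const_mult case_prod_beta' SW_eps2[unfolded SW_def case_prod_beta'] e1)
  also have "\<dots> = SW D c (\<lambda>P c3. eps P * eps c3)"
    by (simp only: SW_multR SW_eps2)
  also have "\<dots> = eps c" by (rule SW_eps2)
  finally show ?thesis .
qed

lemma SW_scl: "SW D c (\<lambda>x y. sc (g x y) v) = sc (SW D c g) v"
  unfolding SW_def using scl_list[of "\<lambda>p. g (fst p) (snd p)" v "D c"] by (simp add: case_prod_beta')

lemma th_delta: assumes e1: "eps e = 1" shows "tensor2_eq sc (D (th e c)) (map (\<lambda>(x, y). (th e x, th e y)) (D c))"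
  unfolding tensor2_eq_def
proof (intro allI impI)
  fix B assume B: "bil_form sc B"
  obtain v0 :: 'v where v0: "v0 \<noteq> 0" using coal unfolding coalgebra_def by auto
  define Bv where "Bv x y = sc (B x y) v0" for x y
  have bv: "bil Bv" using B unfolding bil_def bil_form_def lin_form_def lin_map_def Bv_def
    by (auto simp: vs.scale_left_distrib vs.scale_scale)
  have "sc (SW D (th e c) B) v0 = sc (SW D c (\<lambda>x y. B (th e x) (th e y))) v0"
    using Dth[OF bv e1, of c] unfolding Bv_def SW_scl .
  hence "SW D (th e c) B = SW D c (\<lambda>x y. B (th e x) (th e y))" using v0 by simp
  thus "(\<Sum>(x, y)\<leftarrow>D (th e c). B x y) = (\<Sum>(x, y)\<leftarrow>map (\<lambda>(x, y). (th e x, th e y)) (D c). B x y)"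
    unfolding SW_def by (simp add: o_def case_prod_beta')
qed

lemma exists_e: "\<exists>e. eps e = 1"
proof (rule ccontr)
  assume "\<nexists>e. eps e = 1"
  have z: "eps x = 0" for x
  proof (rule ccontr)
    assume "eps x \<noteq> 0"
    hence "eps (sc (inverse (eps x)) x) = 1" by (simp add: eps_scale)
    thus False using \<open>\<nexists>e. eps e = 1\<close> by blast
  qed
  obtain c :: 'v where c: "c \<noteq> 0" using coal unfolding coalgebra_def by auto
  have "c = SW D c (\<lambda>x y. sc (eps x) y)" using coal unfolding coalgebra_def SW_def by auto
  also have "\<dots> = 0" unfolding SW_def by (simp add: z case_prod_beta')
  finally show False using c by simp
qed

lemma gm: assumes e1: "eps e = 1" shows "grunspan_map sc D eps br (grunspan_formula D br e)"
proof -
  have eq: "grunspan_formula D br e = th e" by (rule ext) (rule th_formula)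
  show ?thesis unfolding eq grunspan_map_def coalg_map_def
    using lin_th0 th_delta[OF e1] eps_th[OF e1] G[OF e1] by simp
qed

end


theorem mainTheorem14:
  fixes sc :: "'f::field \<Rightarrow> 'v::ab_group_add \<Rightarrow> 'v"
    and D :: "'v \<Rightarrow> ('v \<times> 'v) list" and eps :: "'v \<Rightarrow> 'f"
    and br :: "'v \<Rightarrow> 'v \<Rightarrow> 'v \<Rightarrow> 'v"
  assumes "hopf_heap sc D eps br"
  shows "(\<exists>th. grunspan_map sc D eps br th) \<and>
         (\<forall>e. eps e = 1 \<longrightarrow> grunspan_map sc D eps br (grunspan_formula D br e))"
proof -
  interpret H: HH sc D eps br by unfold_locales (rule assms)
  show ?thesis using H.gm H.exists_e by blast
qed

end
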